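(* Let $H$ be a trigraph of maximum red degree at most $4$ containing a fence gadget $F$ attached to a single vertex $s$, where $s$ has red degree at most $3$, and assume $F$ satisfies the attachment rule in $H$. Then there is a partial $4$-sequence from $H$ to the trigraph $H'$ obtained from $H$ by contracting $V(F)$ into a single vertex.
   Context: A trigraph $G$ consists of a vertex set $V(G)$ and two disjoint sets of unordered pairs of distinct vertices: black edges and red edges; the red graph is formed by the red edges, and the red degree of a vertex is its degree in the red graph. Contracting two distinct vertices $u,v$ replaces them by a new vertex $w$ such that, for every other vertex $z$, $wz$ is black if $uz,vz$ are both black, a non-edge if both are non-edges, and red otherwise. A partial $d$-sequence from $G$ is a sequence of trigraphs starting at $G$, each obtained from the previous by one contraction, all of maximum red degree at most $d$. A fence gadget is a trigraph $F$ on $A\cup B$, $A=\{a_1,\dots,a_6\}$, $B=\{b_1,\dots,b_6\}$, whose black edges are those of the cycles $a_1a_2a_3a_4a_5a_6a_1$ and $b_1b_2b_3b_4b_5b_6b_1$ together with $b_1a_6$, and whose red edges are $a_ib_i$ for $i\in[6]$ and $a_ib_{i+1}$ for $i\in[5]$. Inside a trigraph $G$, $F$ is attached to a nonempty set $S\subseteq V(G)\setminus V(F)$ if every vertex of $A$ is joined by a black edge to every vertex of $S$ and no vertex of $B$ is adjacent to a vertex of $S$. $F$ satisfies the attachment rule in $G$ if $V(F)$ is the vertex set of a connected component of the red graph of $G$ and there is a set $X\subseteq V(G)\setminus(V(F)\cup S)$ such that every vertex of $A$ has exactly $X\cup S$ as its set of neighbours outside $V(F)$, every vertex of $B$ has exactly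 $X$ as its set of neighbours outside $V(F)$ (all these edges black), and every vertex of $X$ is adjacent to every vertex of $S$. *)

theory Defs
  imports Main
begin

type_synonym 'v trigraph = "'v set \<times> 'v set set \<times> 'v set set"

definition verts :: "'v trigraph \<Rightarrow> 'v set" where "verts G = fst G"
definition black :: "'v trigraph \<Rightarrow> 'v set set" where "black G = fst (snd G)"
definition red :: "'v trigraph \<Rightarrow> 'v set set" where "red G = snd (snd G)"

definition pairs_on :: "'v set \<Rightarrow> 'v set set" where
  "pairs_on V = {{x, y} | x y. x \<in> V \<and> y \<in> V \<and> x \<noteq> y}"

definition trigraph :: "'v trigraph \<Rightarrow> bool" where
  "trigraph G \<longleftrightarrow> finite (verts G) \<and> black G \<subseteq> pairs_on (verts G)
     \<and> red G \<subseteq> pairs_on (verts G) \<and> black G \<inter> red G = {}"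

definition red_degree :: "'v trigraph \<Rightarrow> 'v \<Rightarrow> nat" where
  "red_degree G x = card {y \<in> verts G. {x, y} \<in> red G}"

definition max_red_deg_le :: "'v trigraph \<Rightarrow> nat \<Rightarrow> bool" where
  "max_red_deg_le G d \<longleftrightarrow> (\<forall>x \<in> verts G. red_degree G x \<le> d)"

text \<open>Contract a set S of vertices into one new vertex named w
  (w must not clash with the remaining vertices).\<close>
definition contract_set :: "'v trigraph \<Rightarrow> 'v set \<Rightarrow> 'v \<Rightarrow> 'v trigraph" where
  "contract_set G S w =
    ((verts G - S) \<union> {w},
     {e \<in> black G. e \<subseteq> verts G - S}
       \<union> {{w, z} | z. z \<in> verts G - S \<and> (\<forall>x \<in> S. {x, z} \<in> black G)},
     {e \<in> red G. e \<subseteq> verts G - S}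
       \<union> {{w, z} | z. z \<in> verts G - S \<and> \<not> (\<forall>x \<in> S. {x, z} \<in> black G)
              \<and> \<not> (\<forall>x \<in> S. {x, z} \<notin> black G \<and> {x, z} \<notin> red G)})"

definition contraction_step :: "'v trigraph \<Rightarrow> 'v trigraph \<Rightarrow> bool" where
  "contraction_step G G' \<longleftrightarrow> (\<exists>u v w. u \<in> verts G \<and> v \<in> verts G \<and> u \<noteq> v
      \<and> w \<notin> verts G - {u, v} \<and> G' = contract_set G {u, v} w)"

definition partial_seq :: "nat \<Rightarrow> 'v trigraph list \<Rightarrow> bool" where
  "partial_seq d Gs \<longleftrightarrow> Gs \<noteq> []
     \<and> (\<forall>i. Suc i < length Gs \<longrightarrow> contraction_step (Gs ! i) (Gs ! Suc i))
     \<and> (\<forall>G \<in> set Gs. max_red_deg_le G d)"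

definition trigraph_iso :: "'v trigraph \<Rightarrow> 'v trigraph \<Rightarrow> bool" where
  "trigraph_iso G1 G2 \<longleftrightarrow> (\<exists>f. bij_betw f (verts G1) (verts G2)
     \<and> (\<forall>x \<in> verts G1. \<forall>y \<in> verts G1.
          ({f x, f y} \<in> black G2 \<longleftrightarrow> {x, y} \<in> black G1)
        \<and> ({f x, f y} \<in> red G2 \<longleftrightarrow> {x, y} \<in> red G1)))"

definition fence_black :: "(nat \<Rightarrow> 'v) \<Rightarrow> (nat \<Rightarrow> 'v) \<Rightarrow> 'v set set" where
  "fence_black a b = {{a i, a (Suc i)} | i. 1 \<le> i \<and> i \<le> 5} \<union> {{a 6, a 1}}
     \<union> {{b i, b (Suc i)} | i. 1 \<le> i \<and> i \<le> 5} \<union> {{b 6, b 1}} \<union> {{b 1, a 6}}"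

definition fence_red :: "(nat \<Rightarrow> 'v) \<Rightarrow> (nat \<Rightarrow> 'v) \<Rightarrow> 'v set set" where
  "fence_red a b = {{a i, b i} | i. 1 \<le> i \<and> i \<le> 6}
     \<union> {{a i, b (Suc i)} | i. 1 \<le> i \<and> i \<le> 5}"

definition fence_verts :: "(nat \<Rightarrow> 'v) \<Rightarrow> (nat \<Rightarrow> 'v) \<Rightarrow> 'v set" where
  "fence_verts a b = a ` {1..6} \<union> b ` {1..6}"

definition contains_fence :: "'v trigraph \<Rightarrow> (nat \<Rightarrow> 'v) \<Rightarrow> (nat \<Rightarrow> 'v) \<Rightarrow> bool" where
  "contains_fence G a b \<longleftrightarrow>
     inj_on a {1..6} \<and> inj_on b {1..6} \<and> a ` {1..6} \<inter> b ` {1..6} = {}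
     \<and> fence_verts a b \<subseteq> verts G
     \<and> (\<forall>x \<in> fence_verts a b. \<forall>y \<in> fence_verts a b. x \<noteq> y \<longrightarrow>
          ({x, y} \<in> black G \<longleftrightarrow> {x, y} \<in> fence_black a b)
        \<and> ({x, y} \<in> red G \<longleftrightarrow> {x, y} \<in> fence_red a b))"

definition adjacent :: "'v trigraph \<Rightarrow> 'v \<Rightarrow> 'v \<Rightarrow> bool" where
  "adjacent G x y \<longleftrightarrow> {x, y} \<in> black G \<or> {x, y} \<in> red G"

definition attached :: "'v trigraph \<Rightarrow> (nat \<Rightarrow> 'v) \<Rightarrow> (nat \<Rightarrow> 'v) \<Rightarrow> 'v set \<Rightarrow> bool" where
  "attached G a b S \<longleftrightarrow> S \<noteq> {} \<and> S \<subseteq> verts G - fence_verts a b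
     \<and> (\<forall>i \<in> {1..6}. \<forall>s \<in> S. {a i, s} \<in> black G)
     \<and> (\<forall>i \<in> {1..6}. \<forall>s \<in> S. \<not> adjacent G (b i) s)"

definition red_rel :: "'v trigraph \<Rightarrow> ('v \<times> 'v) set" where
  "red_rel G = {(x, y). {x, y} \<in> red G}"

definition red_component :: "'v trigraph \<Rightarrow> 'v \<Rightarrow> 'v set" where
  "red_component G x = {y. (x, y) \<in> (red_rel G)\<^sup>*}"

definition attachment_rule :: "'v trigraph \<Rightarrow> (nat \<Rightarrow> 'v) \<Rightarrow> (nat \<Rightarrow> 'v) \<Rightarrow> 'v set \<Rightarrow> bool" where
  "attachment_rule G a b S \<longleftrightarrow>
     (\<exists>x \<in> fence_verts a b. fence_verts a b = red_component G x)
     \<and> (\<exists>X. X \<subseteq> verts G - (fence_verts a b \<union> S)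
        \<and> (\<forall>i \<in> {1..6}. \<forall>z \<in> verts G - fence_verts a b.
              (adjacent G (a i) z \<longleftrightarrow> z \<in> X \<union> S) \<and> {a i, z} \<notin> red G)
        \<and> (\<forall>i \<in> {1..6}. \<forall>z \<in> verts G - fence_verts a b.
              (adjacent G (b i) z \<longleftrightarrow> z \<in> X) \<and> {b i, z} \<notin> red G)
        \<and> (\<forall>x \<in> X. \<forall>s \<in> S. adjacent G x s))"

end

theory Submission imports Defs begin


definition Kc :: "'v set \<Rightarrow> ('v \<Rightarrow> 'v set) \<Rightarrow> 'v \<Rightarrow> 'v set" where
  "Kc N cls u = (if u \<in> N then cls u else {u})"
definition allb :: "'v trigraph \<Rightarrow> 'v set \<Rightarrow> 'v set \<Rightarrow> bool" where
  "allb H A B \<longleftrightarrow> (\<forall>x\<in>A. \<forall>y\<in>B. {x,y} \<in> black H)"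
definition alln :: "'v trigraph \<Rightarrow> 'v set \<Rightarrow> 'v set \<Rightarrow> bool" where
  "alln H A B \<longleftrightarrow> (\<forall>x\<in>A. \<forall>y\<in>B. {x,y} \<notin> black H \<and> {x,y} \<notin> red H)"

definition Q :: "'v trigraph \<Rightarrow> 'v set \<Rightarrow> 'v set \<Rightarrow> ('v \<Rightarrow> 'v set) \<Rightarrow> 'v trigraph" where
  "Q H F N cls = ((verts H - F) \<union> N,
     {{u,z} | u z. u \<in> (verts H - F) \<union> N \<and> z \<in> (verts H - F) \<union> N \<and> u \<noteq> z
        \<and> allb H (Kc N cls u) (Kc N cls z)},
     {{u,z} | u z. u \<in> (verts H - F) \<union> N \<and> z \<in> (verts H - F) \<union> N \<and> u \<noteq> z
        \<and> \<not> allb H (Kc N cls u) (Kc N cls z) \<and> \<not> alln H (Kc N cls u) (Kc N cls z)})"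

lemma ball_swap_dbl: "(\<forall>x\<in>A. \<forall>y\<in>B. P {x,y}) \<Longrightarrow> (\<forall>x\<in>B. \<forall>y\<in>A. P {x,y})"
proof (intro ballI)
  fix x y assume a: "\<forall>x\<in>A. \<forall>y\<in>B. P {x,y}" "x \<in> B" "y \<in> A"
  then have "P {y,x}" by blast
  thus "P {x,y}" by (simp add: insert_commute)
qed
lemma allb_sym: "allb H A B = allb H B A"
  unfolding allb_def using ball_swap_dbl[of A B "\<lambda>e. e \<in> black H"] ball_swap_dbl[of B A "\<lambda>e. e \<in> black H"] by blast
lemma alln_sym: "alln H A B = alln H B A"
  unfolding alln_def using ball_swap_dbl[of A B "\<lambda>e. e \<notin> black H \<and> e \<notin> red H"] ball_swap_dbl[of B A "\<lambda>e. e \<notin> black H \<and> e \<notin> red H"] by blast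
lemma allb_Un: "allb H (A \<union> B) C = (allb H A C \<and> allb H B C)"
  unfolding allb_def by auto
lemma alln_Un: "alln H (A \<union> B) C = (alln H A C \<and> alln H B C)"
  unfolding alln_def by auto
lemma allb_Un2: "allb H C (A \<union> B) = (allb H C A \<and> allb H C B)"
  unfolding allb_def by auto
lemma alln_Un2: "alln H C (A \<union> B) = (alln H C A \<and> alln H C B)"
  unfolding alln_def by auto
lemma allb_alln: "A \<noteq> {} \<Longrightarrow> B \<noteq> {} \<Longrightarrow> allb H A B \<Longrightarrow> alln H A B \<Longrightarrow> False"
  unfolding allb_def alln_def by blast

lemma verts_Q: "verts (Q H F N cls) = (verts H - F) \<union> N"
  by (simp add: Q_def verts_def)

lemma black_Q_mem: "{u,z} \<in> black (Q H F N cls) \<longleftrightarrow>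
   u \<in> (verts H - F) \<union> N \<and> z \<in> (verts H - F) \<union> N \<and> u \<noteq> z \<and> allb H (Kc N cls u) (Kc N cls z)"
proof
  assume "{u,z} \<in> black (Q H F N cls)"
  then obtain u' z' where e: "{u,z} = {u',z'}" and c: "u' \<in> (verts H - F) \<union> N" "z' \<in> (verts H - F) \<union> N"
    "u' \<noteq> z'" "allb H (Kc N cls u') (Kc N cls z')" unfolding Q_def black_def by auto
  from e have "(u=u' \<and> z=z') \<or> (u=z' \<and> z=u')" by (simp add: doubleton_eq_iff)
  then show "u \<in> (verts H - F) \<union> N \<and> z \<in> (verts H - F) \<union> N \<and> u \<noteq> z \<and> allb H (Kc N cls u) (Kc N cls z)"
    using c allb_sym[of H "Kc N cls u" "Kc N cls z"] by blast
next
  assume "u \<in> (verts H - F) \<union> N \<and> z \<in> (verts H - F) \<union> N \<and> u \<noteq> z \<and> allb H (Kc N cls u) (Kc N cls z)"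
  then show "{u,z} \<in> black (Q H F N cls)" unfolding Q_def black_def by auto
qed

lemma red_Q_mem: "{u,z} \<in> red (Q H F N cls) \<longleftrightarrow>
   u \<in> (verts H - F) \<union> N \<and> z \<in> (verts H - F) \<union> N \<and> u \<noteq> z
     \<and> \<not> allb H (Kc N cls u) (Kc N cls z) \<and> \<not> alln H (Kc N cls u) (Kc N cls z)"
proof
  assume "{u,z} \<in> red (Q H F N cls)"
  then obtain u' z' where e: "{u,z} = {u',z'}" and c: "u' \<in> (verts H - F) \<union> N" "z' \<in> (verts H - F) \<union> N"
    "u' \<noteq> z'" "\<not> allb H (Kc N cls u') (Kc N cls z')" "\<not> alln H (Kc N cls u') (Kc N cls z')"
    unfolding Q_def red_def by auto
  from e have "(u=u' \<and> z=z') \<or> (u=z' \<and> z=u')" by (simp add: doubleton_eq_iff)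
  then show "u \<in> (verts H - F) \<union> N \<and> z \<in> (verts H - F) \<union> N \<and> u \<noteq> z
     \<and> \<not> allb H (Kc N cls u) (Kc N cls z) \<and> \<not> alln H (Kc N cls u) (Kc N cls z)"
    using c allb_sym[of H "Kc N cls u" "Kc N cls z"] alln_sym[of H "Kc N cls u" "Kc N cls z"] by blast
next
  assume "u \<in> (verts H - F) \<union> N \<and> z \<in> (verts H - F) \<union> N \<and> u \<noteq> z
     \<and> \<not> allb H (Kc N cls u) (Kc N cls z) \<and> \<not> alln H (Kc N cls u) (Kc N cls z)"
  then show "{u,z} \<in> red (Q H F N cls)" unfolding Q_def red_def by auto
qed

lemma single_notin_Q: "{z} \<notin> black (Q H F N cls)" "{z} \<notin> red (Q H F N cls)"
  using black_Q_mem[of z z] red_Q_mem[of z z] by auto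

lemma black_Q_dbl: "e \<in> black (Q H F N cls) \<Longrightarrow> \<exists>u z. e = {u,z}"
  unfolding Q_def black_def by auto
lemma red_Q_dbl: "e \<in> red (Q H F N cls) \<Longrightarrow> \<exists>u z. e = {u,z}"
  unfolding Q_def red_def by auto

lemma dbl_set_eq:
  assumes "\<forall>e\<in>A. \<exists>u z. e = {u,z}" "\<forall>e\<in>B. \<exists>u z. e = {u,z}"
    "\<And>u z. {u,z} \<in> A \<longleftrightarrow> {u,z} \<in> B"
  shows "A = B"
proof (rule set_eqI)
  fix e
  show "e \<in> A \<longleftrightarrow> e \<in> B"
  proof
    assume "e \<in> A"
    then obtain u z where "e = {u,z}" using assms(1) by blast
    then show "e \<in> B" using \<open>e \<in> A\<close> assms(3)[of u z] by simp
  next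
    assume "e \<in> B"
    then obtain u z where "e = {u,z}" using assms(2) by blast
    then show "e \<in> A" using \<open>e \<in> B\<close> assms(3)[of u z] by simp
  qed
qed

lemma Q_cong: "(\<And>v. v \<in> N \<Longrightarrow> c1 v = c2 v) \<Longrightarrow> Q H F N c1 = Q H F N c2"
proof -
  assume "\<And>v. v \<in> N \<Longrightarrow> c1 v = c2 v"
  then have "Kc N c1 = Kc N c2" by (intro ext) (simp add: Kc_def)
  then show ?thesis unfolding Q_def by simp
qed

lemma trigraph_eqI:
  "verts G1 = verts G2 \<Longrightarrow> black G1 = black G2 \<Longrightarrow> red G1 = red G2 \<Longrightarrow> G1 = G2"
  unfolding verts_def black_def red_def by (simp add: prod_eq_iff)

lemma pairs_onD: "{u,z} \<in> pairs_on V \<Longrightarrow> u \<in> V \<and> z \<in> V \<and> u \<noteq> z"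
  unfolding pairs_on_def by (auto simp: doubleton_eq_iff)

lemma allb_single: "allb H {u} {z} \<longleftrightarrow> {u,z} \<in> black H"
  unfolding allb_def by simp
lemma alln_single: "alln H {u} {z} \<longleftrightarrow> {u,z} \<notin> black H \<and> {u,z} \<notin> red H"
  unfolding alln_def by simp

lemma Q_init:
  assumes "trigraph H" "F \<subseteq> verts H"
  shows "Q H F F (\<lambda>x. {x}) = H"
proof -
  have K: "Kc F (\<lambda>x. {x}) u = {u}" for u by (simp add: Kc_def)
  have V: "(verts H - F) \<union> F = verts H" using assms(2) by auto
  have tb: "black H \<subseteq> pairs_on (verts H)" and tr: "red H \<subseteq> pairs_on (verts H)"
    and dj: "black H \<inter> red H = {}" using assms(1) by (auto simp: trigraph_def)
  have "black (Q H F F (\<lambda>x. {x})) = black H"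
  proof (rule dbl_set_eq)
    show "\<forall>e\<in>black (Q H F F (\<lambda>x. {x})). \<exists>u z. e = {u,z}" using black_Q_dbl by blast
    show "\<forall>e\<in>black H. \<exists>u z. e = {u,z}" using tb unfolding pairs_on_def by blast
    fix u z
    show "{u,z} \<in> black (Q H F F (\<lambda>x. {x})) \<longleftrightarrow> {u,z} \<in> black H"
      unfolding black_Q_mem K V allb_single using tb pairs_onD[of u z "verts H"] by blast
  qed
  moreover have "red (Q H F F (\<lambda>x. {x})) = red H"
  proof (rule dbl_set_eq)
    show "\<forall>e\<in>red (Q H F F (\<lambda>x. {x})). \<exists>u z. e = {u,z}" using red_Q_dbl by blast
    show "\<forall>e\<in>red H. \<exists>u z. e = {u,z}" using tr unfolding pairs_on_def by blast
    fix u z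
    show "{u,z} \<in> red (Q H F F (\<lambda>x. {x})) \<longleftrightarrow> {u,z} \<in> red H"
      unfolding red_Q_mem K V allb_single alln_single using tr dj pairs_onD[of u z "verts H"] by blast
  qed
  moreover have "verts (Q H F F (\<lambda>x. {x})) = verts H" using V by (simp add: verts_Q)
  ultimately show ?thesis
    by (intro trigraph_eqI)
qed

lemma contract_parts:
  "verts (contract_set G S w) = (verts G - S) \<union> {w}"
  "black (contract_set G S w) = {e \<in> black G. e \<subseteq> verts G - S}
       \<union> {{w, z} | z. z \<in> verts G - S \<and> (\<forall>x \<in> S. {x, z} \<in> black G)}"
  "red (contract_set G S w) = {e \<in> red G. e \<subseteq> verts G - S}
       \<union> {{w, z} | z. z \<in> verts G - S \<and> \<not> (\<forall>x \<in> S. {x, z} \<in> black G)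
              \<and> \<not> (\<forall>x \<in> S. {x, z} \<notin> black G \<and> {x, z} \<notin> red G)}"
  unfolding contract_set_def verts_def black_def red_def by simp_all


lemma cb_w: "{w1,y} \<in> black (contract_set G {w1,w2} w1) \<longleftrightarrow>
   y \<in> verts G - {w1,w2} \<and> {w1,y} \<in> black G \<and> {w2,y} \<in> black G"
  unfolding contract_parts by (auto simp: doubleton_eq_iff)
lemma cb_o: "u \<noteq> w1 \<Longrightarrow> z \<noteq> w1 \<Longrightarrow> {u,z} \<in> black (contract_set G {w1,w2} w1) \<longleftrightarrow>
   {u,z} \<in> black G \<and> u \<in> verts G - {w1,w2} \<and> z \<in> verts G - {w1,w2}"
  unfolding contract_parts by (auto simp: doubleton_eq_iff)
lemma cr_w: "{w1,y} \<in> red (contract_set G {w1,w2} w1) \<longleftrightarrow>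
   y \<in> verts G - {w1,w2} \<and> \<not> ({w1,y} \<in> black G \<and> {w2,y} \<in> black G)
     \<and> \<not> (({w1,y} \<notin> black G \<and> {w1,y} \<notin> red G) \<and> ({w2,y} \<notin> black G \<and> {w2,y} \<notin> red G))"
  unfolding contract_parts by (auto simp: doubleton_eq_iff)
lemma cr_o: "u \<noteq> w1 \<Longrightarrow> z \<noteq> w1 \<Longrightarrow> {u,z} \<in> red (contract_set G {w1,w2} w1) \<longleftrightarrow>
   {u,z} \<in> red G \<and> u \<in> verts G - {w1,w2} \<and> z \<in> verts G - {w1,w2}"
  unfolding contract_parts by (auto simp: doubleton_eq_iff)

lemma Q_merge:
  assumes w: "w1 \<in> N" "w2 \<in> N" "w1 \<noteq> w2" and NF: "N \<subseteq> F" and ne: "\<forall>w\<in>N. cls w \<noteq> {}"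
  shows "contract_set (Q H F N cls) {w1,w2} w1 = Q H F (N - {w2}) (cls(w1 := cls w1 \<union> cls w2))"
    (is "contract_set ?G _ _ = Q H F ?N' ?c'")
proof -
  let ?V = "(verts H - F) \<union> N"
  let ?C = "contract_set ?G {w1,w2} w1"
  let ?Q = "Q H F ?N' ?c'"
  have Kne: "Kc N cls u \<noteq> {}" for u using ne by (auto simp: Kc_def)
  have K': "Kc ?N' ?c' u = (if u = w1 then cls w1 \<union> cls w2 else Kc N cls u)" if "u \<noteq> w2" for u
    using that w by (auto simp: Kc_def)
  have Kw: "Kc N cls w1 = cls w1" "Kc N cls w2 = cls w2" using w by (auto simp: Kc_def)
  have w12: "w1 \<notin> verts H - F" "w2 \<notin> verts H - F" using w NF by auto
  have VG: "verts ?G = ?V" by (simp add: verts_Q)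
  have V': "(verts H - F) \<union> ?N' = ?V - {w2}" using w12 by auto
  have bw: "{w1,y} \<in> black ?C \<longleftrightarrow> {w1,y} \<in> black ?Q" for y
  proof -
    have "{w1,y} \<in> black ?C \<longleftrightarrow> y \<in> ?V - {w1,w2} \<and> allb H (cls w1) (Kc N cls y) \<and> allb H (cls w2) (Kc N cls y)"
      unfolding cb_w VG black_Q_mem Kw using w by auto
    also have "\<dots> \<longleftrightarrow> {w1,y} \<in> black ?Q"
      unfolding black_Q_mem V' using w K'[of w1] K'[of y] by (auto simp: allb_Un)
    finally show ?thesis .
  qed
  have bo: "{u,z} \<in> black ?C \<longleftrightarrow> {u,z} \<in> black ?Q" if "u \<noteq> w1" "z \<noteq> w1" for u z
  proof -
    have "{u,z} \<in> black ?C \<longleftrightarrow> u \<in> ?V - {w1,w2} \<and> z \<in> ?V - {w1,w2} \<and> u \<noteq> z \<and> allb H (Kc N cls u) (Kc N cls z)"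
      unfolding cb_o[OF that] VG black_Q_mem by auto
    also have "\<dots> \<longleftrightarrow> {u,z} \<in> black ?Q"
      unfolding black_Q_mem V' using that K'[of u] K'[of z] by auto
    finally show ?thesis .
  qed
  have rw: "{w1,y} \<in> red ?C \<longleftrightarrow> {w1,y} \<in> red ?Q" for y
  proof -
    have "{w1,y} \<in> red ?C \<longleftrightarrow> y \<in> ?V - {w1,w2} \<and>
        \<not> (allb H (cls w1) (Kc N cls y) \<and> allb H (cls w2) (Kc N cls y)) \<and>
        \<not> (alln H (cls w1) (Kc N cls y) \<and> alln H (cls w2) (Kc N cls y))"
      unfolding cr_w VG black_Q_mem red_Q_mem Kw using w allb_alln[OF Kne Kne, of H w1 y] allb_alln[OF Kne Kne, of H w2 y] Kw
      by auto
    also have "\<dots> \<longleftrightarrow> {w1,y} \<in> red ?Q"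
      unfolding red_Q_mem V' using w K'[of w1] K'[of y] by (auto simp: allb_Un alln_Un)
    finally show ?thesis .
  qed
  have ro: "{u,z} \<in> red ?C \<longleftrightarrow> {u,z} \<in> red ?Q" if "u \<noteq> w1" "z \<noteq> w1" for u z
  proof -
    have "{u,z} \<in> red ?C \<longleftrightarrow> u \<in> ?V - {w1,w2} \<and> z \<in> ?V - {w1,w2} \<and> u \<noteq> z
         \<and> \<not> allb H (Kc N cls u) (Kc N cls z) \<and> \<not> alln H (Kc N cls u) (Kc N cls z)"
      unfolding cr_o[OF that] VG red_Q_mem by auto
    also have "\<dots> \<longleftrightarrow> {u,z} \<in> red ?Q"
      unfolding red_Q_mem V' using that K'[of u] K'[of z] by auto
    finally show ?thesis .
  qed
  show ?thesis
  proof (rule trigraph_eqI)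
    show "verts ?C = verts ?Q"
      unfolding contract_parts verts_Q using w w12 by auto
    show "black ?C = black ?Q"
    proof (rule dbl_set_eq)
      show "\<forall>e\<in>black ?C. \<exists>u z. e = {u,z}"
        unfolding contract_parts using black_Q_dbl by blast
      show "\<forall>e\<in>black ?Q. \<exists>u z. e = {u,z}" using black_Q_dbl by blast
      fix u z
      show "{u,z} \<in> black ?C \<longleftrightarrow> {u,z} \<in> black ?Q"
      proof (cases "u = w1")
        case True thus ?thesis using bw[of z] by simp
      next
        case False show ?thesis
        proof (cases "z = w1")
          case True then have "{u,z} = {w1,u}" by auto
          thus ?thesis using bw[of u] by simp
        next
          case False thus ?thesis using bo[of u z] \<open>u \<noteq> w1\<close> by simp
        qed
      qed
    qed
    show "red ?C = red ?Q"
    proof (rule dbl_set_eq)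
      show "\<forall>e\<in>red ?C. \<exists>u z. e = {u,z}"
        unfolding contract_parts using red_Q_dbl by blast
      show "\<forall>e\<in>red ?Q. \<exists>u z. e = {u,z}" using red_Q_dbl by blast
      fix u z
      show "{u,z} \<in> red ?C \<longleftrightarrow> {u,z} \<in> red ?Q"
      proof (cases "u = w1")
        case True thus ?thesis using rw[of z] by simp
      next
        case False show ?thesis
        proof (cases "z = w1")
          case True then have "{u,z} = {w1,u}" by auto
          thus ?thesis using rw[of u] by simp
        next
          case False thus ?thesis using ro[of u z] \<open>u \<noteq> w1\<close> by simp
        qed
      qed
    qed
  qed
qed

lemma pairs_on_dbl: "e \<in> pairs_on V \<Longrightarrow> \<exists>u z. e = {u,z}"
  unfolding pairs_on_def by blast

lemma cs_bw: "w \<in> S \<Longrightarrow> {w,y} \<in> black (contract_set G S w) \<longleftrightarrow>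
   y \<in> verts G - S \<and> (\<forall>x\<in>S. {x,y} \<in> black G)"
  unfolding contract_parts by (auto simp: doubleton_eq_iff)
lemma cs_bo: "u \<noteq> w \<Longrightarrow> z \<noteq> w \<Longrightarrow> {u,z} \<in> black (contract_set G S w) \<longleftrightarrow>
   {u,z} \<in> black G \<and> u \<in> verts G - S \<and> z \<in> verts G - S"
  unfolding contract_parts by (auto simp: doubleton_eq_iff)
lemma cs_rw: "w \<in> S \<Longrightarrow> {w,y} \<in> red (contract_set G S w) \<longleftrightarrow>
   y \<in> verts G - S \<and> \<not> (\<forall>x\<in>S. {x,y} \<in> black G) \<and> \<not> (\<forall>x\<in>S. {x,y} \<notin> black G \<and> {x,y} \<notin> red G)"
  unfolding contract_parts by (auto simp: doubleton_eq_iff)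
lemma cs_ro: "u \<noteq> w \<Longrightarrow> z \<noteq> w \<Longrightarrow> {u,z} \<in> red (contract_set G S w) \<longleftrightarrow>
   {u,z} \<in> red G \<and> u \<in> verts G - S \<and> z \<in> verts G - S"
  unfolding contract_parts by (auto simp: doubleton_eq_iff)

lemma Q_final:
  assumes tg: "trigraph H" and FV: "F \<subseteq> verts H" and wF: "w \<in> F" and cw: "cls w = F"
  shows "Q H F {w} cls = contract_set H F w"
proof -
  let ?G = "Q H F {w} cls"
  let ?C = "contract_set H F w"
  have tb: "black H \<subseteq> pairs_on (verts H)" and tr: "red H \<subseteq> pairs_on (verts H)"
    and dj: "black H \<inter> red H = {}" using tg by (auto simp: trigraph_def)
  have pb: "u \<noteq> z" if "{u,z} \<in> black H" for u z using pairs_onD[OF subsetD[OF tb that]] by simp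
  have pr: "u \<noteq> z" if "{u,z} \<in> red H" for u z using pairs_onD[OF subsetD[OF tr that]] by simp
  have djr: "{u,z} \<notin> black H" if "{u,z} \<in> red H" for u z using dj that by blast
  have Kw: "Kc {w} cls w = F" using cw by (simp add: Kc_def)
  have Ko: "Kc {w} cls u = {u}" if "u \<noteq> w" for u using that by (simp add: Kc_def)
  have bw: "{w,y} \<in> black ?G \<longleftrightarrow> {w,y} \<in> black ?C" for y
  proof -
    have "{w,y} \<in> black ?G \<longleftrightarrow> y \<in> verts H - F \<and> allb H F {y}"
    proof (cases "y = w")
      case True thus ?thesis unfolding black_Q_mem using wF by simp
    next
      case False thus ?thesis unfolding black_Q_mem Kw Ko[OF False] using wF by blast
    qed
    also have "\<dots> \<longleftrightarrow> {w,y} \<in> black ?C"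
      unfolding cs_bw[OF wF] allb_def by simp
    finally show ?thesis .
  qed
  have bo: "{u,z} \<in> black ?G \<longleftrightarrow> {u,z} \<in> black ?C" if "u \<noteq> w" "z \<noteq> w" for u z
  proof -
    have "{u,z} \<in> black ?G \<longleftrightarrow> u \<in> verts H - F \<and> z \<in> verts H - F \<and> u \<noteq> z \<and> {u,z} \<in> black H"
      unfolding black_Q_mem Ko[OF that(1)] Ko[OF that(2)] allb_single using that by blast
    also have "\<dots> \<longleftrightarrow> {u,z} \<in> black ?C"
      unfolding cs_bo[OF that] using pb[of u z] by auto
    finally show ?thesis .
  qed
  have rw: "{w,y} \<in> red ?G \<longleftrightarrow> {w,y} \<in> red ?C" for y
  proof -
    have "{w,y} \<in> red ?G \<longleftrightarrow> y \<in> verts H - F \<and> \<not> allb H F {y} \<and> \<not> alln H F {y}"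
    proof (cases "y = w")
      case True thus ?thesis unfolding red_Q_mem using wF by simp
    next
      case False thus ?thesis unfolding red_Q_mem Kw Ko[OF False] using wF by blast
    qed
    also have "\<dots> \<longleftrightarrow> {w,y} \<in> red ?C"
      unfolding cs_rw[OF wF] allb_def alln_def by simp
    finally show ?thesis .
  qed
  have ro: "{u,z} \<in> red ?G \<longleftrightarrow> {u,z} \<in> red ?C" if "u \<noteq> w" "z \<noteq> w" for u z
  proof -
    have "{u,z} \<in> red ?G \<longleftrightarrow> u \<in> verts H - F \<and> z \<in> verts H - F \<and> u \<noteq> z
       \<and> \<not> {u,z} \<in> black H \<and> \<not> ({u,z} \<notin> black H \<and> {u,z} \<notin> red H)"
      unfolding red_Q_mem Ko[OF that(1)] Ko[OF that(2)] allb_single alln_single using that by blast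
    also have "\<dots> \<longleftrightarrow> {u,z} \<in> red ?C"
      unfolding cs_ro[OF that] using pr[of u z] djr[of u z] by auto
    finally show ?thesis .
  qed
  show ?thesis
  proof (rule trigraph_eqI)
    show "verts ?G = verts ?C" unfolding contract_parts verts_Q using wF FV by auto
    show "black ?G = black ?C"
    proof (rule dbl_set_eq)
      show "\<forall>e\<in>black ?G. \<exists>u z. e = {u,z}" using black_Q_dbl by blast
      show "\<forall>e\<in>black ?C. \<exists>u z. e = {u,z}"
      proof
        fix e assume "e \<in> black ?C"
        then have "e \<in> black H \<or> (\<exists>z. e = {w,z})" unfolding contract_parts by blast
        then show "\<exists>u z. e = {u,z}" using tb pairs_on_dbl by blast
      qed
      fix u z
      show "{u,z} \<in> black ?G \<longleftrightarrow> {u,z} \<in> black ?C"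
      proof (cases "u = w")
        case True thus ?thesis using bw[of z] by simp
      next
        case False show ?thesis
        proof (cases "z = w")
          case True then have "{u,z} = {w,u}" by auto
          thus ?thesis using bw[of u] by simp
        next
          case False thus ?thesis using bo[of u z] \<open>u \<noteq> w\<close> by simp
        qed
      qed
    qed
    show "red ?G = red ?C"
    proof (rule dbl_set_eq)
      show "\<forall>e\<in>red ?G. \<exists>u z. e = {u,z}" using red_Q_dbl by blast
      show "\<forall>e\<in>red ?C. \<exists>u z. e = {u,z}"
      proof
        fix e assume "e \<in> red ?C"
        then have "e \<in> red H \<or> (\<exists>z. e = {w,z})" unfolding contract_parts by blast
        then show "\<exists>u z. e = {u,z}" using tr pairs_on_dbl by blast
      qed
      fix u z
      show "{u,z} \<in> red ?G \<longleftrightarrow> {u,z} \<in> red ?C"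
      proof (cases "u = w")
        case True thus ?thesis using rw[of z] by simp
      next
        case False show ?thesis
        proof (cases "z = w")
          case True then have "{u,z} = {w,u}" by auto
          thus ?thesis using rw[of u] by simp
        next
          case False thus ?thesis using ro[of u z] \<open>u \<noteq> w\<close> by simp
        qed
      qed
    qed
  qed
qed

definition fv :: "(nat \<Rightarrow> 'v) \<Rightarrow> (nat \<Rightarrow> 'v) \<Rightarrow> nat \<Rightarrow> 'v" where
  "fv a b i = (if i < 6 then a (i+1) else b (i - 5))"
definition bB :: "nat \<Rightarrow> nat \<Rightarrow> bool" where
  "bB i j \<longleftrightarrow> (i < 5 \<and> j = i+1) \<or> (i = 5 \<and> j = 0) \<or> (6 \<le> i \<and> i < 11 \<and> j = i+1) \<or> (i = 11 \<and> j = 6) \<or> (i = 6 \<and> j = 5)"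
definition bR :: "nat \<Rightarrow> nat \<Rightarrow> bool" where
  "bR i j \<longleftrightarrow> (i < 6 \<and> j = i+6) \<or> (i < 5 \<and> j = i+7)"

lemma fv_lo: "i < 6 \<Longrightarrow> fv a b i = a (i+1)" by (simp add: fv_def)
lemma fv_hi: "6 \<le> i \<Longrightarrow> fv a b i = b (i-5)" by (simp add: fv_def)

lemma fb: "fence_black a b = (\<lambda>(i,j). {fv a b i, fv a b j}) ` {(i,j). bB i j}"
proof (rule set_eqI)
  fix e
  show "e \<in> fence_black a b \<longleftrightarrow> e \<in> (\<lambda>(i,j). {fv a b i, fv a b j}) ` {(i,j). bB i j}"
  proof
    assume "e \<in> fence_black a b"
    then consider (A) i where "1 \<le> i" "i \<le> 5" "e = {a i, a (Suc i)}"
      | (A6) "e = {a 6, a 1}"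
      | (B) i where "1 \<le> i" "i \<le> 5" "e = {b i, b (Suc i)}"
      | (B6) "e = {b 6, b 1}"
      | (X) "e = {b 1, a 6}"
      unfolding fence_black_def by blast
    then show "e \<in> (\<lambda>(i,j). {fv a b i, fv a b j}) ` {(i,j). bB i j}"
    proof cases
      case (A i)
      then have "e = (\<lambda>(i,j). {fv a b i, fv a b j}) (i-1, i)" "bB (i-1) i"
        by (auto simp: fv_def bB_def)
      then show ?thesis by blast
    next
      case A6
      then have "e = (\<lambda>(i,j). {fv a b i, fv a b j}) (5, 0)" "bB 5 0"
        by (auto simp: fv_def bB_def)
      then show ?thesis by blast
    next
      case (B i)
      then have "e = (\<lambda>(i,j). {fv a b i, fv a b j}) (i+5, i+6)" "bB (i+5) (i+6)"
        by (auto simp: fv_def bB_def)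
      then show ?thesis by blast
    next
      case B6
      then have "e = (\<lambda>(i,j). {fv a b i, fv a b j}) (11, 6)" "bB 11 6"
        by (auto simp: fv_def bB_def)
      then show ?thesis by blast
    next
      case X
      then have "e = (\<lambda>(i,j). {fv a b i, fv a b j}) (6, 5)" "bB 6 5"
        by (auto simp: fv_def bB_def)
      then show ?thesis by blast
    qed
  next
    assume "e \<in> (\<lambda>(i,j). {fv a b i, fv a b j}) ` {(i,j). bB i j}"
    then obtain i j where e: "e = {fv a b i, fv a b j}" and bb: "bB i j" by auto
    from bb consider "i < 5" "j = i+1" | "i = 5" "j = 0" | "6 \<le> i" "i < 11" "j = i+1"
      | "i = 11" "j = 6" | "i = 6" "j = 5" unfolding bB_def by blast
    then show "e \<in> fence_black a b"
    proof cases
      case 1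
      then have "e = {a (i+1), a (Suc (i+1))}" "1 \<le> i+1" "i+1 \<le> 5" using e by (auto simp: fv_def)
      then show ?thesis unfolding fence_black_def by blast
    next
      case 2
      then have "e = {a 6, a 1}" using e by (auto simp: fv_def)
      then show ?thesis unfolding fence_black_def by blast
    next
      case 3
      moreover have "i - 4 = Suc (i - 5)" using 3 by arith
      ultimately have "e = {b (i-5), b (Suc (i-5))}" "1 \<le> i-5" "i-5 \<le> 5" using e by (auto simp: fv_def)
      then show ?thesis unfolding fence_black_def by blast
    next
      case 4
      then have "e = {b 6, b 1}" using e by (auto simp: fv_def)
      then show ?thesis unfolding fence_black_def by blast
    next
      case 5
      then have "e = {b 1, a 6}" using e by (auto simp: fv_def)
      then show ?thesis unfolding fence_black_def by blast
    qed
  qed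
qed

lemma fr: "fence_red a b = (\<lambda>(i,j). {fv a b i, fv a b j}) ` {(i,j). bR i j}"
proof (rule set_eqI)
  fix e
  show "e \<in> fence_red a b \<longleftrightarrow> e \<in> (\<lambda>(i,j). {fv a b i, fv a b j}) ` {(i,j). bR i j}"
  proof
    assume "e \<in> fence_red a b"
    then consider (A) i where "1 \<le> i" "i \<le> 6" "e = {a i, b i}"
      | (B) i where "1 \<le> i" "i \<le> 5" "e = {a i, b (Suc i)}"
      unfolding fence_red_def by blast
    then show "e \<in> (\<lambda>(i,j). {fv a b i, fv a b j}) ` {(i,j). bR i j}"
    proof cases
      case (A i)
      then have "e = (\<lambda>(i,j). {fv a b i, fv a b j}) (i-1, i+5)" "bR (i-1) (i+5)"
        by (auto simp: fv_def bR_def)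
      then show ?thesis by blast
    next
      case (B i)
      then have "e = (\<lambda>(i,j). {fv a b i, fv a b j}) (i-1, i+6)" "bR (i-1) (i+6)"
        by (auto simp: fv_def bR_def)
      then show ?thesis by blast
    qed
  next
    assume "e \<in> (\<lambda>(i,j). {fv a b i, fv a b j}) ` {(i,j). bR i j}"
    then obtain i j where e: "e = {fv a b i, fv a b j}" and bb: "bR i j" by auto
    from bb consider "i < 6" "j = i+6" | "i < 5" "j = i+7" unfolding bR_def by blast
    then show "e \<in> fence_red a b"
    proof cases
      case 1
      then have "e = {a (i+1), b (i+1)}" "1 \<le> i+1" "i+1 \<le> 6" using e by (auto simp: fv_def)
      then show ?thesis unfolding fence_red_def by blast
    next
      case 2
      then have "e = {a (i+1), b (Suc (i+1))}" "1 \<le> i+1" "i+1 \<le> 5" using e by (auto simp: fv_def)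
      then show ?thesis unfolding fence_red_def by blast
    qed
  qed
qed

lemma fvv: "fence_verts a b = fv a b ` {0..<12}"
proof (rule set_eqI)
  fix x
  show "x \<in> fence_verts a b \<longleftrightarrow> x \<in> fv a b ` {0..<12}"
  proof
    assume "x \<in> fence_verts a b"
    then consider (A) i where "i \<in> {1..6}" "x = a i" | (B) i where "i \<in> {1..6}" "x = b i"
      unfolding fence_verts_def by blast
    then show "x \<in> fv a b ` {0..<12}"
    proof cases
      case (A i) then have "x = fv a b (i-1)" "i - 1 \<in> {0..<12}" by (auto simp: fv_def)
      then show ?thesis by blast
    next
      case (B i) then have "x = fv a b (i+5)" "i + 5 \<in> {0..<12}" by (auto simp: fv_def)
      then show ?thesis by blast
    qed
  next
    assume "x \<in> fv a b ` {0..<12}"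
    then obtain i where "i < 12" "x = fv a b i" by auto
    then show "x \<in> fence_verts a b" unfolding fence_verts_def fv_def
      by (cases "i < 6") (auto intro!: imageI)
  qed
qed

lemma fv_inj:
  assumes "inj_on a {1..6}" "inj_on b {1..6}" "a ` {1..6} \<inter> b ` {1..6} = {}"
  shows "inj_on (fv a b) {0..<12}"
proof (rule inj_onI)
  fix i j assume ij: "i \<in> {0..<12}" "j \<in> {0..<12}" "fv a b i = fv a b j"
  show "i = j"
  proof (cases "i < 6"; cases "j < 6")
    assume "i < 6" "j < 6"
    then have "a (i+1) = a (j+1)" using ij by (simp add: fv_def)
    moreover have "i+1 \<in> {1..6}" "j+1 \<in> {1..6}" using \<open>i<6\<close> \<open>j<6\<close> by auto
    ultimately have "i+1 = j+1" using assms(1) by (blast dest: inj_onD)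
    then show ?thesis by simp
  next
    assume "i < 6" "\<not> j < 6"
    then have "a (i+1) = b (j-5)" using ij by (simp add: fv_def)
    moreover have "i+1 \<in> {1..6}" "j-5 \<in> {1..6}" using \<open>i<6\<close> \<open>\<not> j<6\<close> ij by auto
    then have "a (i+1) \<in> a ` {1..6}" "b (j-5) \<in> b ` {1..6}" by blast+
    ultimately show ?thesis using assms(3) by auto
  next
    assume "\<not> i < 6" "j < 6"
    then have "b (i-5) = a (j+1)" using ij by (simp add: fv_def)
    moreover have "j+1 \<in> {1..6}" "i-5 \<in> {1..6}" using \<open>\<not> i<6\<close> \<open>j<6\<close> ij by auto
    then have "a (j+1) \<in> a ` {1..6}" "b (i-5) \<in> b ` {1..6}" by blast+
    ultimately show ?thesis using assms(3) by auto
  next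
    assume "\<not> i < 6" "\<not> j < 6"
    then have "b (i-5) = b (j-5)" using ij by (simp add: fv_def)
    moreover have "i-5 \<in> {1..6}" "j-5 \<in> {1..6}" using \<open>\<not> i<6\<close> \<open>\<not> j<6\<close> ij by auto
    ultimately have "i-5 = j-5" using assms(2) by (blast dest: inj_onD)
    then show ?thesis using \<open>\<not> i<6\<close> \<open>\<not> j<6\<close> by simp
  qed
qed
definition bI where "bI i j \<longleftrightarrow> bB i j \<or> bB j i"
definition rI where "rI i j \<longleftrightarrow> bR i j \<or> bR j i"
type_synonym st = "nat list \<times> (nat \<Rightarrow> nat list)"
definition mixI :: "nat list \<Rightarrow> bool" where
  "mixI c \<longleftrightarrow> \<not> list_all (\<lambda>i. i < 6) c \<and> \<not> list_all (\<lambda>i. 6 \<le> i) c"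
definition redI :: "nat list \<Rightarrow> nat list \<Rightarrow> bool" where
  "redI c d \<longleftrightarrow> \<not> list_all (\<lambda>i. list_all (\<lambda>j. bI i j) d) c
      \<and> \<not> list_all (\<lambda>i. list_all (\<lambda>j. \<not> bI i j \<and> \<not> rI i j) d) c"
fun okst :: "st \<Rightarrow> bool" where
  "okst (NI, CI) = (distinct NI \<and> list_all (\<lambda>i. i < 12 \<and> CI i \<noteq> [] \<and> list_all (\<lambda>k. k < 12) (CI i)) NI
     \<and> length (filter (\<lambda>i. mixI (CI i)) NI) \<le> 1
     \<and> list_all (\<lambda>i. length (filter (\<lambda>j. j \<noteq> i \<and> redI (CI i) (CI j)) NI) + (if mixI (CI i) then 1 else 0) \<le> 4) NI)"
fun mstep :: "st \<Rightarrow> nat \<times> nat \<Rightarrow> st" where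
  "mstep (NI, CI) (i, j) = (removeAll j NI, CI(i := CI i @ CI j))"
fun states :: "st \<Rightarrow> (nat \<times> nat) list \<Rightarrow> st list" where
  "states s [] = [s]"
| "states s (m # ms) = s # states (mstep s m) ms"
fun goodm :: "st \<Rightarrow> nat \<times> nat \<Rightarrow> bool" where
  "goodm (NI, CI) (i, j) = (i \<in> set NI \<and> j \<in> set NI \<and> i \<noteq> j)"
fun goodseq :: "st \<Rightarrow> (nat \<times> nat) list \<Rightarrow> bool" where
  "goodseq s [] = True"
| "goodseq s (m # ms) = (goodm s m \<and> goodseq (mstep s m) ms)"
definition s0 :: st where "s0 = ([0..<12], \<lambda>i. [i])"
definition MLst :: "(nat \<times> nat) list" where
  "MLst = [(0,6),(7,8),(1,2),(7,9),(1,3),(7,10),(0,4),(1,5),(7,11),(0,1),(0,7)]"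
fun finalok :: "st \<Rightarrow> bool" where
  "finalok (NI, CI) = (NI = [0] \<and> list_all (\<lambda>k. k \<in> set (CI 0)) [0..<12] \<and> list_all (\<lambda>k. k < 12) (CI 0))"

lemma c1: "goodseq s0 MLst" by code_simp
lemma c2: "finalok (last (states s0 MLst))" by code_simp
lemma c3: "list_all okst (states s0 MLst)" by code_simp
lemma bB_lt: "bB i j \<Longrightarrow> i < 12 \<and> j < 12" unfolding bB_def by auto
lemma bR_lt: "bR i j \<Longrightarrow> i < 12 \<and> j < 12" unfolding bR_def by auto
lemma bB_irr: "\<not> bB i i" unfolding bB_def by auto
lemma bR_irr: "\<not> bR i i" unfolding bR_def by auto

lemma img_dbl_mem:
  assumes inj: "inj_on f {0..<12::nat}" and ij: "i < 12" "j < 12"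
    and P: "\<And>k l. P k l \<Longrightarrow> k < 12 \<and> l < 12"
  shows "{f i, f j} \<in> (\<lambda>(k,l). {f k, f l}) ` {(k,l). P k l} \<longleftrightarrow> P i j \<or> P j i"
proof
  assume "{f i, f j} \<in> (\<lambda>(k,l). {f k, f l}) ` {(k,l). P k l}"
  then obtain k l where kl: "P k l" "{f i, f j} = {f k, f l}" by auto
  have "k < 12" "l < 12" using P[OF kl(1)] by auto
  from kl(2) have "(f i = f k \<and> f j = f l) \<or> (f i = f l \<and> f j = f k)" by (simp add: doubleton_eq_iff)
  then have "(i = k \<and> j = l) \<or> (i = l \<and> j = k)"
    using inj ij \<open>k < 12\<close> \<open>l < 12\<close> by (auto dest: inj_onD)
  then show "P i j \<or> P j i" using kl(1) by blast
next
  assume "P i j \<or> P j i"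
  then show "{f i, f j} \<in> (\<lambda>(k,l). {f k, f l}) ` {(k,l). P k l}"
  proof
    assume "P i j" then show ?thesis by force
  next
    assume "P j i" then have "{f j, f i} \<in> (\<lambda>(k,l). {f k, f l}) ` {(k,l). P k l}" by force
    then show ?thesis by (simp add: insert_commute)
  qed
qed

locale fl =
  fixes H :: "'v trigraph" and a b :: "nat \<Rightarrow> 'v" and s :: 'v and X :: "'v set"
  assumes trig: "trigraph H"
    and cf: "contains_fence H a b"
    and att: "attached H a b {s}"
    and Xs: "X \<subseteq> verts H - (fence_verts a b \<union> {s})"
    and Aadj: "\<forall>i \<in> {1..6}. \<forall>z \<in> verts H - fence_verts a b.
              (adjacent H (a i) z \<longleftrightarrow> z \<in> X \<union> {s}) \<and> {a i, z} \<notin> red H"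
    and Badj: "\<forall>i \<in> {1..6}. \<forall>z \<in> verts H - fence_verts a b.
              (adjacent H (b i) z \<longleftrightarrow> z \<in> X) \<and> {b i, z} \<notin> red H"
begin

abbreviation "FF \<equiv> fence_verts a b"
abbreviation "ff \<equiv> fv a b"

lemma injf: "inj_on ff {0..<12}"
  using cf fv_inj unfolding contains_fence_def by blast

lemma FFimg: "FF = ff ` {0..<12}" by (rule fvv)

lemma FFsub: "FF \<subseteq> verts H" using cf unfolding contains_fence_def by blast

lemma s_out: "s \<in> verts H - FF" using att unfolding attached_def by blast

lemma tb: "black H \<subseteq> pairs_on (verts H)" and tr: "red H \<subseteq> pairs_on (verts H)"
  and dj: "black H \<inter> red H = {}" using trig by (auto simp: trigraph_def)

lemma ff_in: "i < 12 \<Longrightarrow> ff i \<in> FF" using FFimg by auto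

lemma s_notF: "s \<notin> FF" using s_out by blast

lemma ff_eq: "i < 12 \<Longrightarrow> j < 12 \<Longrightarrow> ff i = ff j \<longleftrightarrow> i = j"
  using injf by (auto dest: inj_onD)

lemma black_idx: assumes "i < 12" "j < 12" shows "{ff i, ff j} \<in> black H \<longleftrightarrow> bI i j"
proof (cases "i = j")
  case True
  have "{ff i, ff j} \<notin> black H" using True pairs_onD[OF subsetD[OF tb]] by blast
  then show ?thesis using True bB_irr unfolding bI_def by blast
next
  case False
  then have ne: "ff i \<noteq> ff j" using ff_eq assms by blast
  have "{ff i, ff j} \<in> black H \<longleftrightarrow> {ff i, ff j} \<in> fence_black a b"
    using cf ff_in[OF assms(1)] ff_in[OF assms(2)] ne unfolding contains_fence_def by blast
  also have "\<dots> \<longleftrightarrow> bI i j" unfolding fb bI_def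
    by (rule img_dbl_mem[OF injf assms]) (rule bB_lt)
  finally show ?thesis .
qed

lemma red_idx: assumes "i < 12" "j < 12" shows "{ff i, ff j} \<in> red H \<longleftrightarrow> rI i j"
proof (cases "i = j")
  case True
  have "{ff i, ff j} \<notin> red H" using True pairs_onD[OF subsetD[OF tr]] by blast
  then show ?thesis using True bR_irr unfolding rI_def by blast
next
  case False
  then have ne: "ff i \<noteq> ff j" using ff_eq assms by blast
  have "{ff i, ff j} \<in> red H \<longleftrightarrow> {ff i, ff j} \<in> fence_red a b"
    using cf ff_in[OF assms(1)] ff_in[OF assms(2)] ne unfolding contains_fence_def by blast
  also have "\<dots> \<longleftrightarrow> rI i j" unfolding fr rI_def
    by (rule img_dbl_mem[OF injf assms]) (rule bR_lt)
  finally show ?thesis .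
qed

lemma out_fact:
  assumes "i < 12" "z \<in> verts H - FF"
  shows "({ff i, z} \<in> black H \<longleftrightarrow> (z \<in> X \<or> (z = s \<and> i < 6))) \<and> {ff i, z} \<notin> red H"
proof (cases "i < 6")
  case True
  then have "ff i = a (i+1)" "i+1 \<in> {1..6}" by (auto simp: fv_def)
  then show ?thesis using Aadj assms(2) True unfolding adjacent_def by auto
next
  case False
  then have "ff i = b (i-5)" "i-5 \<in> {1..6}" using assms(1) by (auto simp: fv_def)
  moreover have "s \<notin> X" using Xs by blast
  ultimately show ?thesis using Badj assms(2) False unfolding adjacent_def by auto
qed

lemma out_class:
  assumes "C \<subseteq> FF" "z \<in> verts H - FF" "z \<noteq> s"
  shows "allb H C {z} \<or> alln H C {z}"
proof (cases "z \<in> X")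
  case True
  have "allb H C {z}" unfolding allb_def
  proof (intro ballI)
    fix x y assume "x \<in> C" "y \<in> {z}"
    then obtain i where "i < 12" "x = ff i" "y = z" using assms(1) FFimg by auto
    then show "{x,y} \<in> black H" using out_fact[OF \<open>i<12\<close> assms(2)] True by blast
  qed
  then show ?thesis by blast
next
  case False
  have "alln H C {z}" unfolding alln_def
  proof (intro ballI)
    fix x y assume "x \<in> C" "y \<in> {z}"
    then obtain i where "i < 12" "x = ff i" "y = z" using assms(1) FFimg by auto
    then show "{x,y} \<notin> black H \<and> {x,y} \<notin> red H" using out_fact[OF \<open>i<12\<close> assms(2)] False assms(3) by blast
  qed
  then show ?thesis by blast
qed

lemma allb_idx:
  assumes "list_all (\<lambda>k. k < 12) c" "list_all (\<lambda>k. k < 12) d"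
  shows "allb H (ff ` set c) (ff ` set d) \<longleftrightarrow> list_all (\<lambda>i. list_all (\<lambda>j. bI i j) d) c"
  using assms black_idx unfolding allb_def list_all_iff by auto

lemma alln_idx:
  assumes "list_all (\<lambda>k. k < 12) c" "list_all (\<lambda>k. k < 12) d"
  shows "alln H (ff ` set c) (ff ` set d) \<longleftrightarrow> list_all (\<lambda>i. list_all (\<lambda>j. \<not> bI i j \<and> \<not> rI i j) d) c"
  using assms black_idx red_idx unfolding alln_def list_all_iff by auto

lemma allb_s:
  assumes "list_all (\<lambda>k. k < 12) c"
  shows "allb H (ff ` set c) {s} \<longleftrightarrow> list_all (\<lambda>i. i < 6) c"
  using assms out_fact[OF _ s_out] Xs unfolding allb_def list_all_iff by auto

lemma alln_s:
  assumes "list_all (\<lambda>k. k < 12) c"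
  shows "alln H (ff ` set c) {s} \<longleftrightarrow> list_all (\<lambda>i. 6 \<le> i) c"
  using assms out_fact[OF _ s_out] Xs unfolding alln_def list_all_iff by auto

definition Qi :: "st \<Rightarrow> 'v trigraph" where
  "Qi st = Q H FF (ff ` set (fst st)) (\<lambda>v. ff ` set (snd st (inv_into {0..<12} ff v)))"

end

lemma card_filter_le: "card (f ` {j \<in> set xs. P j}) \<le> length (filter P xs)"
proof -
  have "{j \<in> set xs. P j} = set (filter P xs)" by auto
  then have "card (f ` {j \<in> set xs. P j}) \<le> card (set (filter P xs))"
    using card_image_le[of "set (filter P xs)" f] by simp
  also have "\<dots> \<le> length (filter P xs)" by (rule card_length)
  finally show ?thesis .
qed

context fl begin

definition clsI :: "(nat \<Rightarrow> nat list) \<Rightarrow> 'v \<Rightarrow> 'v set" where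
  "clsI CI = (\<lambda>v. ff ` set (CI (inv_into {0..<12} ff v)))"

lemma Qi_eq: "Qi (NI, CI) = Q H FF (ff ` set NI) (clsI CI)"
  by (simp add: Qi_def clsI_def)

lemma clsI_ff: "j < 12 \<Longrightarrow> clsI CI (ff j) = ff ` set (CI j)"
  unfolding clsI_def using injf by (simp add: inv_into_f_f)

lemma NI_sub: "list_all (\<lambda>k. k < 12) NI \<Longrightarrow> ff ` set NI \<subseteq> FF"
  using ff_in by (auto simp: list_all_iff)

lemma Kc_name: "list_all (\<lambda>k. k < 12) NI \<Longrightarrow> j \<in> set NI \<Longrightarrow> Kc (ff ` set NI) (clsI CI) (ff j) = ff ` set (CI j)"
  by (simp add: Kc_def clsI_ff list_all_iff)

lemma Kc_out: "list_all (\<lambda>k. k < 12) NI \<Longrightarrow> v \<notin> FF \<Longrightarrow> Kc (ff ` set NI) (clsI CI) v = {v}"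
  using NI_sub unfolding Kc_def by auto

lemma deg_ok:
  assumes ok: "okst (NI, CI)" and mrd: "max_red_deg_le H 4" and rs: "red_degree H s \<le> 3"
  shows "max_red_deg_le (Qi (NI, CI)) 4"
proof -
  let ?N = "ff ` set NI"
  let ?K = "Kc ?N (clsI CI)"
  let ?G = "Qi (NI, CI)"
  let ?V = "(verts H - FF) \<union> ?N"
  have lt: "list_all (\<lambda>k. k < 12) NI" using ok by (auto simp: list_all_iff)
  have lti: "i < 12" "list_all (\<lambda>k. k < 12) (CI i)" if "i \<in> set NI" for i
    using ok that by (auto simp: list_all_iff)
  have mix1: "length (filter (\<lambda>i. mixI (CI i)) NI) \<le> 1" using ok by simp
  have degi: "length (filter (\<lambda>j. j \<noteq> i \<and> redI (CI i) (CI j)) NI) + (if mixI (CI i) then 1 else 0) \<le> 4"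
    if "i \<in> set NI" for i using ok that by (auto simp: list_all_iff)
  have VG: "verts ?G = ?V" by (simp add: Qi_eq verts_Q)
  have redG: "{v,y} \<in> red ?G \<longleftrightarrow> v \<in> ?V \<and> y \<in> ?V \<and> v \<noteq> y \<and> \<not> allb H (?K v) (?K y) \<and> \<not> alln H (?K v) (?K y)"
    for v y unfolding Qi_eq red_Q_mem by simp
  have finV: "finite ?V" using trig by (auto simp: trigraph_def)
  have Ksub: "?K (ff j) \<subseteq> FF" if "j \<in> set NI" for j
    using Kc_name[OF lt that] lti[OF that] ff_in by (auto simp: list_all_iff)
  have KN: "?K (ff j) = ff ` set (CI j)" if "j \<in> set NI" for j using Kc_name[OF lt that] .
  have KO: "?K v = {v}" if "v \<notin> FF" for v using Kc_out[OF lt that] .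
  have outred: "{v,y} \<in> red H" if "v \<in> verts H - FF" "y \<in> verts H - FF" "{v,y} \<in> red ?G" for v y
  proof -
    have "\<not> allb H {v} {y}" "\<not> alln H {v} {y}" using that(3) KO that(1,2) unfolding redG by auto
    then show ?thesis unfolding allb_single alln_single by blast
  qed
  have nameout: "False" if "j \<in> set NI" "y \<in> verts H - FF" "y \<noteq> s"
      "\<not> allb H (?K (ff j)) (?K y)" "\<not> alln H (?K (ff j)) (?K y)" for j y
    using out_class[OF Ksub[OF that(1)] that(2,3)] KO[of y] that by auto
  show ?thesis unfolding max_red_deg_le_def red_degree_def
  proof
    fix v assume vG: "v \<in> verts ?G"
    let ?R = "{y \<in> verts ?G. {v, y} \<in> red ?G}"
    show "card ?R \<le> 4"
    proof (cases "v \<in> ?N")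
      case True
      then obtain i where i: "i \<in> set NI" "v = ff i" by auto
      let ?S = "(if mixI (CI i) then {s} else {}) \<union> ff ` {j \<in> set NI. j \<noteq> i \<and> redI (CI i) (CI j)}"
      have "?R \<subseteq> ?S"
      proof
        fix y assume y: "y \<in> ?R"
        then have r: "y \<in> ?V" "v \<noteq> y" "\<not> allb H (?K v) (?K y)" "\<not> alln H (?K v) (?K y)"
          using VG redG by auto
        show "y \<in> ?S"
        proof (cases "y \<in> ?N")
          case True
          then obtain j where j: "j \<in> set NI" "y = ff j" by auto
          have "j \<noteq> i" using r(2) i j by auto
          moreover have "redI (CI i) (CI j)"
            using r(3,4) unfolding i(2) j(2) KN[OF i(1)] KN[OF j(1)] redI_def
              allb_idx[OF lti(2)[OF i(1)] lti(2)[OF j(1)]] alln_idx[OF lti(2)[OF i(1)] lti(2)[OF j(1)]]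
            by blast
          ultimately show ?thesis using j by blast
        next
          case False
          then have yo: "y \<in> verts H - FF" using r(1) by blast
          show ?thesis
          proof (cases "y = s")
            case True
            have "\<not> allb H (ff ` set (CI i)) {s}" "\<not> alln H (ff ` set (CI i)) {s}"
              using r(3,4) KN[OF i(1)] KO[OF s_notF] i(2) True by simp_all
            then have "mixI (CI i)" unfolding mixI_def allb_s[OF lti(2)[OF i(1)]] alln_s[OF lti(2)[OF i(1)]] by blast
            then show ?thesis using True by simp
          next
            case False
            then show ?thesis using nameout[OF i(1) yo False] r(3,4) i(2) by blast
          qed
        qed
      qed
      then have "card ?R \<le> card ?S" by (rule card_mono[rotated]) auto
      also have "\<dots> \<le> card (if mixI (CI i) then {s} else {}) + card (ff ` {j \<in> set NI. j \<noteq> i \<and> redI (CI i) (CI j)})"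
        by (rule card_Un_le)
      also have "\<dots> \<le> (if mixI (CI i) then 1 else 0) + length (filter (\<lambda>j. j \<noteq> i \<and> redI (CI i) (CI j)) NI)"
        using card_filter_le[of ff NI "\<lambda>j. j \<noteq> i \<and> redI (CI i) (CI j)"] by simp
      also have "\<dots> \<le> 4" using degi[OF i(1)] by simp
      finally show ?thesis .
    next
      case False
      then have vo: "v \<in> verts H - FF" using vG VG by blast
      show ?thesis
      proof (cases "v = s")
        case False
        have "?R \<subseteq> {y \<in> verts H. {v,y} \<in> red H}"
        proof
          fix y assume y: "y \<in> ?R"
          then have r: "y \<in> ?V" "{v,y} \<in> red ?G" using VG by auto
          have "y \<notin> ?N"
          proof
            assume "y \<in> ?N"
            then obtain j where j: "j \<in> set NI" "y = ff j" by auto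
            have "\<not> allb H (?K v) (?K y)" "\<not> alln H (?K v) (?K y)" using r(2) redG by auto
            then show False using nameout[OF j(1) vo False] j(2) allb_sym alln_sym by metis
          qed
          then have "y \<in> verts H - FF" using r(1) by blast
          then show "y \<in> {y \<in> verts H. {v,y} \<in> red H}" using outred[OF vo _ r(2)] by blast
        qed
        moreover have "finite {y \<in> verts H. {v,y} \<in> red H}" using trig by (auto simp: trigraph_def)
        ultimately have "card ?R \<le> card {y \<in> verts H. {v,y} \<in> red H}" by (rule card_mono[rotated])
        also have "\<dots> \<le> 4" using mrd vo unfolding max_red_deg_le_def red_degree_def by blast
        finally show ?thesis .
      next
        case True
        let ?S = "{y \<in> verts H. {s,y} \<in> red H} \<union> ff ` {j \<in> set NI. mixI (CI j)}"
        have "?R \<subseteq> ?S"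
        proof
          fix y assume y: "y \<in> ?R"
          then have r: "y \<in> ?V" "{v,y} \<in> red ?G" using VG by auto
          show "y \<in> ?S"
          proof (cases "y \<in> ?N")
            case True
            then obtain j where j: "j \<in> set NI" "y = ff j" by auto
            have "\<not> allb H (?K v) (?K y)" "\<not> alln H (?K v) (?K y)" using r(2) redG by auto
            then have "\<not> allb H (?K y) {s}" "\<not> alln H (?K y) {s}"
              using KO[OF s_notF] \<open>v = s\<close> allb_sym alln_sym by metis+
            then have "mixI (CI j)" unfolding j(2) KN[OF j(1)] mixI_def allb_s[OF lti(2)[OF j(1)]] alln_s[OF lti(2)[OF j(1)]]
              by blast
            then show ?thesis using j by blast
          next
            case False
            then have "y \<in> verts H - FF" using r(1) by blast
            then show ?thesis using outred[OF vo _ r(2)] \<open>v = s\<close> by blast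
          qed
        qed
        moreover have "finite ?S" using trig by (auto simp: trigraph_def)
        ultimately have "card ?R \<le> card ?S" by (rule card_mono[rotated])
        also have "\<dots> \<le> card {y \<in> verts H. {s,y} \<in> red H} + card (ff ` {j \<in> set NI. mixI (CI j)})"
          by (rule card_Un_le)
        also have "\<dots> \<le> 3 + 1"
          using rs card_filter_le[of ff NI "\<lambda>j. mixI (CI j)"] mix1 unfolding red_degree_def by linarith
        finally show ?thesis by simp
      qed
    qed
  qed
qed

end

lemma states_nth0: "states st ms ! 0 = st"
  by (cases ms) auto
lemma states_hd: "hd (states st ms) = st"
  by (cases ms) auto
lemma states_ne: "states st ms \<noteq> []"
  by (cases ms) auto

context fl begin

lemma step_ok:
  assumes ok: "okst (NI, CI)" and g: "goodm (NI, CI) (i, j)"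
  shows "contraction_step (Qi (NI, CI)) (Qi (mstep (NI, CI) (i, j)))"
proof -
  let ?N = "ff ` set NI"
  let ?c = "clsI CI"
  have lt: "list_all (\<lambda>k. k < 12) NI" using ok by (auto simp: list_all_iff)
  have ij: "i \<in> set NI" "j \<in> set NI" "i \<noteq> j" using g by auto
  have i12: "i < 12" "j < 12" using ij lt by (auto simp: list_all_iff)
  have fne: "ff i \<noteq> ff j" using ff_eq[OF i12] ij(3) by simp
  have NF: "?N \<subseteq> FF" by (rule NI_sub[OF lt])
  have cne: "\<forall>w\<in>?N. ?c w \<noteq> {}"
  proof
    fix w assume "w \<in> ?N"
    then obtain k where k: "k \<in> set NI" "w = ff k" by auto
    have "k < 12" "CI k \<noteq> []" using ok k(1) by (auto simp: list_all_iff)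
    then show "?c w \<noteq> {}" using clsI_ff k(2) by simp
  qed
  have M: "contract_set (Q H FF ?N ?c) {ff i, ff j} (ff i) = Q H FF (?N - {ff j}) (?c(ff i := ?c (ff i) \<union> ?c (ff j)))"
    by (rule Q_merge) (use ij fne NF cne in auto)
  have N': "ff ` set (removeAll j NI) = ?N - {ff j}"
  proof -
    have "set (removeAll j NI) = set NI - {j}" by simp
    moreover have "ff ` (set NI - {j}) = ff ` set NI - ff ` {j}"
      by (rule inj_on_image_set_diff[OF injf]) (use lt i12 in \<open>auto simp: list_all_iff\<close>)
    ultimately show ?thesis by simp
  qed
  have C': "Q H FF (?N - {ff j}) (?c(ff i := ?c (ff i) \<union> ?c (ff j))) = Q H FF (?N - {ff j}) (clsI (CI(i := CI i @ CI j)))"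
  proof (rule Q_cong)
    fix v assume "v \<in> ?N - {ff j}"
    then obtain k where k: "k \<in> set NI" "v = ff k" by auto
    have k12: "k < 12" using k lt by (auto simp: list_all_iff)
    show "(?c(ff i := ?c (ff i) \<union> ?c (ff j))) v = clsI (CI(i := CI i @ CI j)) v"
    proof (cases "k = i")
      case True
      then show ?thesis using k i12 by (simp add: clsI_ff image_Un)
    next
      case False
      then have "ff k \<noteq> ff i" using ff_eq[OF k12 i12(1)] by simp
      then show ?thesis using k k12 False by (simp add: clsI_ff)
    qed
  qed
  have E: "Qi (mstep (NI, CI) (i, j)) = contract_set (Qi (NI, CI)) {ff i, ff j} (ff i)"
    unfolding Qi_eq mstep.simps Qi_eq M C' N' ..
  show ?thesis unfolding contraction_step_def
  proof (intro exI conjI)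
    show "ff i \<in> verts (Qi (NI, CI))" "ff j \<in> verts (Qi (NI, CI))" using ij by (auto simp: Qi_eq verts_Q)
    show "ff i \<noteq> ff j" by (rule fne)
    show "ff i \<notin> verts (Qi (NI, CI)) - {ff i, ff j}" by simp
    show "Qi (mstep (NI, CI) (i, j)) = contract_set (Qi (NI, CI)) {ff i, ff j} (ff i)" by (rule E)
  qed
qed

lemma chain:
  "goodseq st ms \<Longrightarrow> list_all okst (states st ms) \<Longrightarrow> Suc k < length (states st ms) \<Longrightarrow>
   contraction_step (Qi (states st ms ! k)) (Qi (states st ms ! Suc k))"
proof (induction ms arbitrary: st k)
  case Nil
  then show ?case by simp
next
  case (Cons m ms)
  obtain NI CI where st: "st = (NI, CI)" by (cases st)
  obtain i j where m: "m = (i, j)" by (cases m)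
  show ?case
  proof (cases k)
    case 0
    have "okst st" using Cons.prems(2) by simp
    moreover have "goodm st m" using Cons.prems(1) by simp
    ultimately show ?thesis using step_ok[of NI CI i j] 0 st m by (simp add: states_nth0)
  next
    case (Suc k')
    have "goodseq (mstep st m) ms" using Cons.prems(1) by simp
    moreover have "list_all okst (states (mstep st m) ms)" using Cons.prems(2) by simp
    moreover have "Suc k' < length (states (mstep st m) ms)" using Cons.prems(3) Suc by simp
    ultimately show ?thesis using Cons.IH Suc by simp
  qed
qed

lemma init_ok: "Qi s0 = H"
proof -
  have "set [0..<12] = {0..<(12::nat)}" by simp
  then have "Qi s0 = Q H FF FF (clsI (\<lambda>i. [i]))" unfolding s0_def Qi_eq FFimg by simp
  also have "\<dots> = Q H FF FF (\<lambda>x. {x})"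
  proof (rule Q_cong)
    fix v assume "v \<in> FF"
    then obtain k where "k < 12" "v = ff k" using FFimg by auto
    then show "clsI (\<lambda>i. [i]) v = {v}" by (simp add: clsI_ff)
  qed
  also have "\<dots> = H" by (rule Q_init[OF trig FFsub])
  finally show ?thesis .
qed

lemma final_ok: assumes "finalok (NI, CI)" shows "Qi (NI, CI) = contract_set H FF (a 1)"
proof -
  have NI: "NI = [0]" and c1: "list_all (\<lambda>k. k \<in> set (CI 0)) [0..<12]" and c2: "list_all (\<lambda>k. k < 12) (CI 0)"
    using assms by auto
  have "set (CI 0) = {0..<12}" using c1 c2 by (auto simp: list_all_iff)
  then have cl: "clsI CI (ff 0) = FF" using clsI_ff[of 0 CI] FFimg by simp
  have "Qi (NI, CI) = Q H FF {ff 0} (clsI CI)" using NI by (simp add: Qi_eq)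
  also have "\<dots> = contract_set H FF (ff 0)" using Q_final[of H FF "ff 0" "clsI CI", OF trig FFsub _ cl] ff_in[of 0] by simp
  also have "ff 0 = a 1" by (simp add: fv_def)
  finally show ?thesis .
qed

lemma main:
  assumes mrd: "max_red_deg_le H 4" and rs: "red_degree H s \<le> 3"
  shows "\<exists>Gs. partial_seq 4 Gs \<and> hd Gs = H
           \<and> trigraph_iso (last Gs) (contract_set H (fence_verts a b) (a 1))"
proof -
  let ?Ss = "states s0 MLst"
  let ?Gs = "map Qi ?Ss"
  have ps: "partial_seq 4 ?Gs" unfolding partial_seq_def
  proof (intro conjI allI impI ballI)
    show "?Gs \<noteq> []" using states_ne by simp
    fix k assume "Suc k < length ?Gs"
    then show "contraction_step (?Gs ! k) (?Gs ! Suc k)" using chain[OF c1 c3] by simp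
  next
    fix G assume "G \<in> set ?Gs"
    then obtain st where st: "st \<in> set ?Ss" "G = Qi st" by auto
    obtain NI CI where "st = (NI, CI)" by (cases st)
    moreover have "okst st" using c3 st(1) by (simp add: list_all_iff)
    ultimately show "max_red_deg_le G 4" using deg_ok[OF _ mrd rs] st(2) by simp
  qed
  have hd: "hd ?Gs = H" using states_ne init_ok by (simp add: hd_map states_hd)
  obtain NI CI where lst: "last ?Ss = (NI, CI)" by (cases "last ?Ss")
  have "last ?Gs = Qi (NI, CI)" using states_ne lst by (simp add: last_map)
  also have "\<dots> = contract_set H FF (a 1)" using final_ok c2 lst by simp
  finally have lg: "last ?Gs = contract_set H FF (a 1)" .
  have iso: "trigraph_iso G G" for G :: "'v trigraph"
    unfolding trigraph_iso_def by (rule exI[of _ id]) simp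
  show ?thesis
    by (rule exI[of _ ?Gs]) (simp add: ps hd lg iso)
qed

end

theorem lemma4p10:
  fixes H :: "'v trigraph" and a b :: "nat \<Rightarrow> 'v" and s :: 'v
  assumes "trigraph H"
    and "max_red_deg_le H 4"
    and "contains_fence H a b"
    and "attached H a b {s}"
    and "red_degree H s \<le> 3"
    and "attachment_rule H a b {s}"
  shows "\<exists>Gs. partial_seq 4 Gs \<and> hd Gs = H
           \<and> trigraph_iso (last Gs) (contract_set H (fence_verts a b) (a 1))"
proof -
  obtain X where X: "X \<subseteq> verts H - (fence_verts a b \<union> {s})"
    and A: "\<forall>i \<in> {1..6}. \<forall>z \<in> verts H - fence_verts a b.
              (adjacent H (a i) z \<longleftrightarrow> z \<in> X \<union> {s}) \<and> {a i, z} \<notin> red H"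
    and B: "\<forall>i \<in> {1..6}. \<forall>z \<in> verts H - fence_verts a b.
              (adjacent H (b i) z \<longleftrightarrow> z \<in> X) \<and> {b i, z} \<notin> red H"
    using assms(6) unfolding attachment_rule_def by blast
  interpret fl H a b s X
    by (rule fl.intro) (use assms X A B in auto)
  show ?thesis by (rule main[OF assms(2) assms(5)])
qed


end
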